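(* Let $N\ge2$ be an integer and let $\omega$ be a primitive $N$-th root of unity. For all nonzero complex numbers $b,z$, $$\sum_{k=0}^{N-1}(b;\omega)_k\,z^k=\Big(\frac{bz}{\omega}\Big)^{N-1}\sum_{k=0}^{N-1}(\omega/z;\omega)_k\Big(\frac{\omega}{b}\Big)^k .$$
   Context: $(x;q)_k=\prod_{m=1}^{k}(1-xq^{m-1})$ denotes the $q$-Pochhammer symbol, with $(x;q)_0=1$. *)

theory Defs
  imports Complex_Main
begin

definition qpoch :: "complex \<Rightarrow> complex \<Rightarrow> nat \<Rightarrow> complex" where
  "qpoch x q k = (\<Prod>m=1..k. 1 - x * q ^ (m - 1))"

definition primitive_root_of_unity :: "nat \<Rightarrow> complex \<Rightarrow> bool" where
  "primitive_root_of_unity N w \<longleftrightarrow> 0 < N \<and> w ^ N = 1 \<and> (\<forall>k. 0 < k \<and> k < N \<longrightarrow> w ^ k \<noteq> 1)"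

end

theory Submission
  imports Defs "HOL-Computational_Algebra.Polynomial"
begin

lemma prim_facts:
  assumes "primitive_root_of_unity N w"
  shows "N > 0" "w ^ N = 1" "w \<noteq> 0" "inj_on (\<lambda>m. w ^ m) {..<N}"
proof -
  show N: "N > 0" "w ^ N = 1" using assms unfolding primitive_root_of_unity_def by auto
  then show "w \<noteq> 0" by (metis power_0_left zero_neq_one gr_implies_not0)
  show "inj_on (\<lambda>m. w ^ m) {..<N}"
  proof (rule inj_onI)
    fix i j assume ij: "i \<in> {..<N}" "j \<in> {..<N}" "w ^ i = w ^ j"
    have w0: "w \<noteq> 0" using N by (metis power_0_left zero_neq_one gr_implies_not0)
    show "i = j"
    proof (rule ccontr)
      assume "i \<noteq> j"
      then consider "i < j" | "j < i" by linarith
      then show False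
      proof cases
        case 1
        have "w ^ j = w ^ i * w ^ (j - i)" using 1 by (simp add: power_add[symmetric])
        then have "w ^ (j - i) = 1" using ij w0 by simp
        then show False using assms 1 ij unfolding primitive_root_of_unity_def by auto
      next
        case 2
        have "w ^ i = w ^ j * w ^ (i - j)" using 2 by (simp add: power_add[symmetric])
        then have "w ^ (i - j) = 1" using ij w0 by simp
        then show False using assms 2 ij unfolding primitive_root_of_unity_def by auto
      qed
    qed
  qed
qed

lemma cyc1:
  assumes "primitive_root_of_unity N w"
  shows "(\<Prod>m<N. (x - w ^ m)) = x ^ N - 1"
proof -
  note pf = prim_facts[OF assms]
  define p where "p = (\<Prod>m<N. [:- (w ^ m), 1:])"
  define q where "q = (monom 1 N - 1 :: complex poly)"
  have "p = q"
  proof (rule poly_eqI_degree_lead_coeff[where n = N and A = "(\<lambda>m. w ^ m) ` {..<N}"])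
    have dp: "degree p = N" unfolding p_def by (subst degree_prod_sum_eq) auto
    have "lead_coeff p = 1" unfolding p_def lead_coeff_prod by simp
    then have "coeff p N = 1" using dp by simp
    moreover have "coeff q N = 1" using pf unfolding q_def by (simp add: coeff_monom)
    ultimately show "coeff p N = coeff q N" by simp
    show "card ((\<lambda>m. w ^ m) ` {..<N}) \<ge> N" using pf by (simp add: card_image)
    show "degree p \<le> N" using dp by simp
    show "degree q \<le> N" unfolding q_def
      by (metis degree_diff_le degree_monom_le degree_1 le0)
    fix y assume "y \<in> (\<lambda>m. w ^ m) ` {..<N}"
    then obtain m where m: "m < N" "y = w ^ m" by auto
    have "poly p y = 0" unfolding p_def poly_prod using m by (auto intro!: bexI[of _ m])
    moreover have "poly q y = 0" unfolding q_def using m pf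
      by (simp add: poly_monom power_mult[symmetric] mult.commute[of m] power_mult)
    ultimately show "poly p y = poly q y" by simp
  qed
  then have "poly p x = poly q x" by simp
  then show ?thesis unfolding p_def q_def poly_prod by (simp add: poly_monom)
qed

lemma prod_shift1: "(\<Prod>m=1..k. g m) = (\<Prod>m<k. g (Suc m))" for g :: "nat \<Rightarrow> complex"
  by (induction k) (auto simp: prod.lessThan_Suc)

lemma qpoch_lt: "qpoch x q k = (\<Prod>m<k. 1 - x * q ^ m)"
  unfolding qpoch_def by (subst prod_shift1) simp

lemma cyc2:
  assumes "primitive_root_of_unity N w"
  shows "(\<Prod>m<N. (1 - b * w ^ m)) = 1 - b ^ N"
proof (cases "b = 0")
  case True then show ?thesis using prim_facts[OF assms] by simp
next
  case False
  have "(\<Prod>m<N. (1 - b * w ^ m)) = (\<Prod>m<N. b * (1/b - w ^ m))"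
    using False by (intro prod.cong) (auto simp: field_simps)
  also have "\<dots> = b ^ N * ((1/b) ^ N - 1)"
    by (simp add: prod.distrib cyc1[OF assms])
  also have "\<dots> = 1 - b ^ N" using False by (simp add: field_simps power_divide)
  finally show ?thesis .
qed

theorem mainTheorem3:
  fixes N :: nat and w b z :: complex
  assumes "N \<ge> 2" and "primitive_root_of_unity N w" and "b \<noteq> 0" and "z \<noteq> 0"
  shows "(\<Sum>k=0..N-1. qpoch b w k * z ^ k)
         = (b * z / w) ^ (N - 1) * (\<Sum>k=0..N-1. qpoch (w / z) w k * (w / b) ^ k)"
proof -
  note pf = prim_facts[OF assms(2)]
  obtain n where Nn: "N = Suc n" using assms(1) by (cases N) auto
  have n1: "N - 1 = n" using Nn by simp
  define P where "P k = (\<Prod>m=1..k. (z - w ^ m))" for k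
  define L where "L b = (\<Sum>k\<le>n. qpoch b w k * z ^ k)" for b
  define R where "R b = (\<Sum>j\<le>n. (b * z / w) ^ j * P (n - j))" for b
  have PSuc: "P (Suc k) = P k * (z - w ^ Suc k)" for k unfolding P_def by simp
  have qSuc: "qpoch x w (Suc k) = qpoch x w k * (1 - x * w ^ k)" for x k
    unfolding qpoch_lt by simp
  have PN: "P (Suc n) = z ^ N - 1"
  proof -
    have "P (Suc n) = (\<Prod>m<Suc n. z - w ^ Suc m)" unfolding P_def by (rule prod_shift1)
    also have "\<dots> = (\<Prod>m<n. z - w ^ Suc m) * (z - 1)" using pf Nn by simp
    also have "\<dots> = (\<Prod>m<Suc n. z - w ^ m)" unfolding prod.lessThan_Suc_shift by (simp add: mult.commute)
    also have "\<dots> = z ^ N - 1" using cyc1[OF assms(2)] Nn by simp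
    finally show ?thesis .
  qed
  have qP: "qpoch (w / z) w k * z ^ k = P k" for k
  proof (induction k)
    case 0 then show ?case by (simp add: qpoch_def P_def)
  next
    case (Suc k)
    have "qpoch (w / z) w (Suc k) * z ^ Suc k = (qpoch (w / z) w k * z ^ k) * ((1 - w / z * w ^ k) * z)"
      by (simp add: qSuc)
    also have "(1 - w / z * w ^ k) * z = z - w ^ Suc k" using assms(4) by (simp add: field_simps)
    finally show ?case using Suc PSuc by simp
  qed
  have step1: "(b * z / w) ^ (N - 1) * (\<Sum>k=0..N-1. qpoch (w / z) w k * (w / b) ^ k) = R b"
  proof -
    have "(b * z / w) ^ (N - 1) * (\<Sum>k=0..N-1. qpoch (w / z) w k * (w / b) ^ k)
        = (\<Sum>k=0..n. (b * z / w) ^ (n - k) * P k)"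
      unfolding n1 sum_distrib_left
    proof (rule sum.cong)
      fix k assume "k \<in> {0..n}"
      then have kn: "k \<le> n" by simp
      have e: "(b * z / w) ^ n = (b * z / w) ^ (n - k) * (b * z / w) ^ k"
        using kn by (simp add: power_add[symmetric])
      have "qpoch (w / z) w k = P k / z ^ k" using qP[of k] assms(4) by (simp add: field_simps)
      then show "(b * z / w) ^ n * (qpoch (w / z) w k * (w / b) ^ k) = (b * z / w) ^ (n - k) * P k"
        unfolding e using assms(3,4) pf(3) by (simp add: field_simps power_mult_distrib power_divide)
    qed simp
    also have "\<dots> = (\<Sum>k=0..n. (b * z / w) ^ (n - (n + 0 - k)) * P (n + 0 - k))"
      by (rule sum.atLeastAtMost_rev)
    also have "\<dots> = R b" unfolding R_def atLeast0AtMost[symmetric]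
      by (intro sum.cong) auto
    finally show ?thesis .
  qed
  have qN: "qpoch x w N = 1 - x ^ N" for x unfolding qpoch_lt by (rule cyc2[OF assms(2)])
  have step2: "L x - 1 + z ^ N * (1 - x ^ N) = z * (1 - x) * L (w * x)" for x
  proof -
    have qs: "qpoch (w * x) w k * (1 - x) = qpoch x w (Suc k)" for k
      unfolding qpoch_lt prod.lessThan_Suc_shift by (simp add: mult_ac)
    have "z * (1 - x) * L (w * x) = (\<Sum>k\<le>n. z ^ Suc k * qpoch x w (Suc k))"
      unfolding L_def sum_distrib_left
      by (intro sum.cong refl) (simp add: qs[symmetric] mult_ac)
    also have "\<dots> = (\<Sum>k\<le>Suc n. z ^ k * qpoch x w k) - 1"
      unfolding sum.atMost_Suc_shift by (simp add: qpoch_def)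
    also have "\<dots> = L x + z ^ N * (1 - x ^ N) - 1"
      unfolding L_def using Nn qN[of x] by (simp add: mult.commute)
    finally show ?thesis by simp
  qed
  have step3: "R x - 1 + z ^ N * (1 - x ^ N) = z * (1 - x) * R (w * x)" for x
  proof -
    have termj: "(x * z / w) ^ j * P (n - j) = x ^ j * z ^ Suc j * P (n - j) - (x * z) ^ j * P (Suc n - j)"
      if "j \<le> n" for j
    proof -
      have sj: "Suc n - j = Suc (n - j)" using that by simp
      have "w ^ Suc (n - j) * w ^ j = w ^ (Suc (n - j) + j)" by (simp add: power_add)
      also have "Suc (n - j) + j = N" using that Nn by simp
      finally have "w ^ Suc (n - j) * w ^ j = 1" using pf by simp
      have inv: "w ^ Suc (n-j) = 1 / w^j" using \<open>w ^ Suc (n - j) * w ^ j = 1\<close> pf(3)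
        by (simp add: eq_divide_eq)
      have "(x*z/w)^j = (x*z)^j / w^j" by (simp add: power_divide)
      also have "\<dots> = (x*z)^j * w^Suc(n-j)" using inv by simp
      finally have "(x * z / w) ^ j = (x * z) ^ j * w ^ Suc (n - j)" .
      then show ?thesis unfolding sj PSuc by (simp add: power_mult_distrib right_diff_distrib mult_ac)
    qed
    have Rw: "R (w * x) = (\<Sum>j\<le>n. (x * z) ^ j * P (n - j))"
      unfolding R_def using pf(3) by (intro sum.cong refl) (simp add: field_simps)
    have "R x = (\<Sum>j\<le>n. x ^ j * z ^ Suc j * P (n - j)) - (\<Sum>j\<le>n. (x * z) ^ j * P (Suc n - j))"
      unfolding R_def sum_subtractf[symmetric] by (intro sum.cong refl termj) simp
    moreover have "(\<Sum>j\<le>n. x ^ j * z ^ Suc j * P (n - j)) = z * R (w * x)"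
      unfolding Rw sum_distrib_left by (intro sum.cong refl) (simp add: power_mult_distrib mult_ac)
    moreover have "(\<Sum>j\<le>n. (x * z) ^ j * P (Suc n - j))
        = (\<Sum>j\<le>Suc n. (x * z) ^ j * P (Suc n - j)) - (x * z) ^ Suc n * P 0"
      by simp
    moreover have "(\<Sum>j\<le>Suc n. (x * z) ^ j * P (Suc n - j)) = P (Suc n) + x * z * R (w * x)"
      unfolding sum.atMost_Suc_shift Rw sum_distrib_left by (simp add: mult_ac)
    moreover have P0: "P 0 = 1" unfolding P_def by simp
    ultimately have "R x = z * R (w * x) - (z ^ N - 1 + x * z * R (w * x) - (x * z) ^ N)"
      by (simp only: PN Nn mult_1_right)
    then show ?thesis by (simp add: algebra_simps power_mult_distrib)
  qed
  define D where "D x = L x - R x" for x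
  have D1: "D x = z * (1 - x) * D (w * x)" for x
  proof -
    have "D x = (L x - 1 + z ^ N * (1 - x ^ N)) - (R x - 1 + z ^ N * (1 - x ^ N))"
      unfolding D_def by simp
    also have "\<dots> = z * (1 - x) * L (w * x) - z * (1 - x) * R (w * x)"
      by (simp only: step2 step3)
    also have "\<dots> = z * (1 - x) * D (w * x)" unfolding D_def by (simp add: right_diff_distrib)
    finally show ?thesis .
  qed
  have Dk: "D x = z ^ k * (\<Prod>m<k. 1 - x * w ^ m) * D (w ^ k * x)" for x k
  proof (induction k)
    case 0 then show ?case by simp
  next
    case (Suc k)
    have Dstep: "D (w ^ k * x) = z * (1 - w ^ k * x) * D (w ^ Suc k * x)"
      using D1[of "w ^ k * x"] by (simp add: mult.assoc)
    have "D x = z ^ k * (\<Prod>m<k. 1 - x * w ^ m) * (z * (1 - w ^ k * x) * D (w ^ Suc k * x))"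
      using Suc Dstep by simp
    also have "\<dots> = z ^ Suc k * ((\<Prod>m<k. 1 - x * w ^ m) * (1 - x * w ^ k)) * D (w ^ Suc k * x)"
      by (simp add: mult_ac)
    also have "\<dots> = z ^ Suc k * (\<Prod>m<Suc k. 1 - x * w ^ m) * D (w ^ Suc k * x)"
      by (simp only: prod.lessThan_Suc)
    finally show ?case .
  qed
  have DN: "D x = z ^ N * (1 - x ^ N) * D x" for x
    using Dk[of x N] cyc2[OF assms(2), of x] pf(2) by simp
  have Dz: "D x = 0" if "x ^ N \<noteq> 1 - 1 / z ^ N" for x
  proof -
    have "z ^ N * (1 - x ^ N) \<noteq> 1"
    proof
      assume "z ^ N * (1 - x ^ N) = 1"
      then have "x ^ N = 1 - 1 / z ^ N" using assms(4) by (simp add: field_simps)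
      with that show False by simp
    qed
    then show ?thesis using DN[of x]
      by (metis mult_cancel_right2)
  qed
  define S where "S = {x::complex. x ^ N = 1 - 1 / z ^ N}"
  have finS: "finite S" unfolding S_def using pf(1) by (rule finite_nth_roots)
  have ev: "eventually (\<lambda>x. \<forall>y\<in>S. x \<noteq> y) (at b)"
    using finS by (intro eventually_ball_finite) (auto intro: eventually_neq_at_within)
  have ev0: "eventually (\<lambda>x. D x = 0) (at b)"
    using ev by eventually_elim (auto intro!: Dz simp: S_def)
  have cont: "continuous (at b) D"
    unfolding D_def[abs_def] L_def[abs_def] R_def[abs_def] qpoch_def
    by (intro continuous_intros) (use pf(3) in auto)
  have "(D \<longlongrightarrow> D b) (at b)" using cont by (simp add: isCont_def continuous_at)
  moreover have "(D \<longlongrightarrow> 0) (at b)" using ev0 by (rule tendsto_eventually)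
  ultimately have "D b = 0" by (intro tendsto_unique) auto
  then have "L b = R b" unfolding D_def by simp
  then show ?thesis using step1 unfolding L_def n1 atLeast0AtMost by simp
qed

end
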